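(* Let $A_0:=(\mathrm{Id}-\tau\Delta_h)^{-1}$. The unique optimal pair $(X^*_{h\tau},U^*_{h\tau})\in\mathbb{X}_{h\tau}\times\mathbb{U}_{h\tau}$ of problem SLQ$_{h\tau}$ satisfies, for $n=0,1,\dots,N-1$, $$X^*_{h\tau}(t_{n+1})=A_0^{n+1}\prod_{j=1}^{n+1}(1+\Delta_jW)X^*_{h\tau}(0)+\tau\sum_{j=0}^nA_0^{n+1-j}\prod_{k=j+2}^{n+1}(1+\Delta_kW)U^*_{h\tau}(t_j)+\sum_{j=0}^nA_0^{n+1-j}\prod_{k=j+2}^{n+1}(1+\Delta_kW)\mathcal{R}_h\sigma(t_j)\Delta_{j+1}W,$$ $X^*_{h\tau}(0)=\mathcal{R}_hX_0$, and the discrete optimality condition $$U^*_{h\tau}(t_n)-(K_{h\tau}X^*_{h\tau})(t_n)=0,$$ where $$(K_{h\tau}X^*_{h\tau})(t_n):=-\tau\,\mathbb{E}\Big[\sum_{j=n+1}^NA_0^{j-n}\prod_{k=n+2}^j(1+\Delta_kW)X^*_{h\tau}(t_j)\,\Big|\,\mathcal{F}_{t_n}\Big]-\alpha\,\mathbb{E}\Big[A_0^{N-n}\prod_{k=n+2}^N(1+\Delta_kW)X^*_{h\tau}(T)\,\Big|\,\mathcal{F}_{t_n}\Big].$$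
   Context: $D\subset\mathbb{R}^d$ is a bounded domain with $C^2$ boundary, $T>0$, $\alpha\ge0$, $\mathbb{L}^2=L^2(D)$, $\mathbb{H}_0^1=H_0^1(D)$, $X_0\in\mathbb{H}_0^1\cap\mathbb{H}^3$ and $\sigma\in C^1([0,T];\mathbb{H}_0^1\cap\mathbb{H}^3)$ are deterministic. $(\Omega,\mathcal{F},\mathbb{F},\mathbb{P})$ is a complete filtered probability space with $\mathbb{F}=\{\mathcal{F}_t\}$ generated by a real standard Wiener process $W$ (augmented by null sets). $\mathbb{V}_h\subset\mathbb{H}_0^1$ is the space of continuous piecewise affine functions on a regular triangulation of $D$ of mesh size $h$; $\Delta_h:\mathbb{V}_h\to\mathbb{V}_h$ is the discrete Laplacian $(-\Delta_h\xi,\phi)_{\mathbb{L}^2}=(\nabla\xi,\nabla\phi)_{\mathbb{L}^2}$; $\mathcal{R}_h$ is the Ritz projection onto $\mathbb{V}_h$; $\mathrm{Id}$ is the identity on $\mathbb{V}_h$. Time mesh: $\tau=T/N\le1$, $t_n=n\tau$, $\Delta_nW=W(t_n)-W(t_{n-1})$; empty products equal $1$. $\mathbb{X}_{h\tau}$ and $\mathbb{U}_{h\tau}$ are the sets of $\mathbb{F}$-adapted square-integrable $\mathbb{V}_h$-valued processes that are constant on each $[t_n,t_{n+1})$ (elements of $\mathbb{X}_{h\tau}$ also carry a terminal value $X(T)=X(t_N)$), with norms $\|X\|_{\mathbb{X}_{h\tau}}^2=\tau\sum_{n=1}^N\mathbb{E}\|X(t_n)\|_{\mathbb{L}^2}^2$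 and $\|U\|_{\mathbb{U}_{h\tau}}^2=\tau\sum_{n=0}^{N-1}\mathbb{E}\|U(t_n)\|_{\mathbb{L}^2}^2$. Problem SLQ$_{h\tau}$: minimize $\mathcal{J}_\tau(X_{h\tau},U_{h\tau})=\frac12[\|X_{h\tau}\|^2_{\mathbb{X}_{h\tau}}+\|U_{h\tau}\|^2_{\mathbb{U}_{h\tau}}]+\frac\alpha2\mathbb{E}\|X_{h\tau}(T)\|_{\mathbb{L}^2}^2$ over $U_{h\tau}\in\mathbb{U}_{h\tau}$, subject to $X_{h\tau}(t_{n+1})-X_{h\tau}(t_n)=\tau[\Delta_hX_{h\tau}(t_{n+1})+U_{h\tau}(t_n)]+[X_{h\tau}(t_n)+\mathcal{R}_h\sigma(t_n)]\Delta_{n+1}W$ for $n=0,\dots,N-1$, $X_{h\tau}(0)=\mathcal{R}_hX_0$. *)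

theory Defs
  imports "HOL-Probability.Probability"
begin

text \<open>The FE space V_h is modelled by a finite-dimensional real inner product space 'v
  whose inner product is the L2 inner product.  The Dirichlet form (grad xi, grad phi)_L2
  restricted to V_h is a symmetric, positive definite bilinear form a on 'v.\<close>

definition grad_form :: "('v::euclidean_space \<Rightarrow> 'v \<Rightarrow> real) \<Rightarrow> bool" where
  "grad_form a \<longleftrightarrow> bilinear a \<and> (\<forall>x y. a x y = a y x) \<and> (\<forall>x. x \<noteq> 0 \<longrightarrow> a x x > 0)"

definition disc_lap :: "('v::euclidean_space \<Rightarrow> 'v \<Rightarrow> real) \<Rightarrow> 'v \<Rightarrow> 'v" where
  "disc_lap a xi = (THE y. \<forall>phi. - (y \<bullet> phi) = a xi phi)"

definition A0 :: "('v::euclidean_space \<Rightarrow> 'v \<Rightarrow> real) \<Rightarrow> real \<Rightarrow> 'v \<Rightarrow> 'v" where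
  "A0 a \<tau> = inv (\<lambda>x. x - \<tau> *\<^sub>R disc_lap a x)"

definition wiener_process :: "'w measure \<Rightarrow> real \<Rightarrow> (real \<Rightarrow> 'w \<Rightarrow> real) \<Rightarrow> bool" where
  "wiener_process M T W \<longleftrightarrow>
     (\<forall>t\<in>{0..T}. W t \<in> borel_measurable M) \<and>
     (AE \<omega> in M. W 0 \<omega> = 0) \<and>
     (AE \<omega> in M. continuous_on {0..T} (\<lambda>t. W t \<omega>)) \<and>
     (\<forall>s t. 0 \<le> s \<longrightarrow> s < t \<longrightarrow> t \<le> T \<longrightarrow>
        distributed M lborel (\<lambda>\<omega>. W t \<omega> - W s \<omega>)
          (\<lambda>x. ennreal (normal_density 0 (sqrt (t - s)) x))) \<and>
     (\<forall>(n::nat) (ts::nat \<Rightarrow> real). 0 \<le> ts 0 \<longrightarrow> ts n \<le> T \<longrightarrow> (\<forall>i<n. ts i < ts (Suc i)) \<longrightarrow>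
        prob_space.indep_vars M (\<lambda>_. borel) (\<lambda>i \<omega>. W (ts (Suc i)) \<omega> - W (ts i) \<omega>) {..<n})"

definition W_filtration :: "'w measure \<Rightarrow> (real \<Rightarrow> 'w \<Rightarrow> real) \<Rightarrow> real \<Rightarrow> 'w measure" where
  "W_filtration M W t = sigma (space M)
     ({W s -` B \<inter> space M | s B. s \<in> {0..t} \<and> B \<in> sets borel} \<union> null_sets M)"

definition tgrid :: "real \<Rightarrow> nat \<Rightarrow> nat \<Rightarrow> real" where
  "tgrid T N n = real n * (T / real N)"

text \<open>Delta_j W = W(t_j) - W(t_{j-1}) (used for j >= 1).\<close>
definition dW :: "(real \<Rightarrow> 'w \<Rightarrow> real) \<Rightarrow> real \<Rightarrow> nat \<Rightarrow> nat \<Rightarrow> 'w \<Rightarrow> real" where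
  "dW W T N j \<omega> = W (tgrid T N j) \<omega> - W (tgrid T N (j - 1)) \<omega>"

definition vec_cond_exp :: "'w measure \<Rightarrow> 'w measure \<Rightarrow> ('w \<Rightarrow> 'v::euclidean_space) \<Rightarrow> 'w \<Rightarrow> 'v" where
  "vec_cond_exp M F Y = (\<lambda>\<omega>. \<Sum>b\<in>Basis. real_cond_exp M F (\<lambda>\<omega>'. Y \<omega>' \<bullet> b) \<omega> *\<^sub>R b)"

text \<open>x0 = R_h X_0, r n = R_h sigma(t_n).  X n = X(t_n) (n = 0..N), U n = U(t_n) (n = 0..N-1).\<close>
definition slq_admissible ::
  "'w measure \<Rightarrow> (real \<Rightarrow> 'w \<Rightarrow> real) \<Rightarrow> real \<Rightarrow> nat \<Rightarrow> ('v::euclidean_space \<Rightarrow> 'v \<Rightarrow> real)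
   \<Rightarrow> 'v \<Rightarrow> (nat \<Rightarrow> 'v) \<Rightarrow> (nat \<Rightarrow> 'w \<Rightarrow> 'v) \<Rightarrow> (nat \<Rightarrow> 'w \<Rightarrow> 'v) \<Rightarrow> bool" where
  "slq_admissible M W T N a x0 r X U \<longleftrightarrow>
     (\<forall>n<N. U n \<in> borel_measurable (W_filtration M W (tgrid T N n)) \<and>
            integrable M (\<lambda>\<omega>. (norm (U n \<omega>))\<^sup>2)) \<and>
     (\<forall>n\<le>N. X n \<in> borel_measurable (W_filtration M W (tgrid T N n)) \<and>
            integrable M (\<lambda>\<omega>. (norm (X n \<omega>))\<^sup>2)) \<and>
     (\<forall>\<omega>\<in>space M. X 0 \<omega> = x0) \<and>
     (\<forall>n<N. \<forall>\<omega>\<in>space M.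
        X (Suc n) \<omega> - X n \<omega> =
          (T / real N) *\<^sub>R (disc_lap a (X (Suc n) \<omega>) + U n \<omega>)
          + dW W T N (Suc n) \<omega> *\<^sub>R (X n \<omega> + r n))"

definition slq_cost ::
  "'w measure \<Rightarrow> real \<Rightarrow> nat \<Rightarrow> real \<Rightarrow> (nat \<Rightarrow> 'w \<Rightarrow> 'v::euclidean_space) \<Rightarrow> (nat \<Rightarrow> 'w \<Rightarrow> 'v) \<Rightarrow> real" where
  "slq_cost M T N \<alpha> X U =
     1/2 * ((T / real N) * (\<Sum>n\<in>{1..N}. integral\<^sup>L M (\<lambda>\<omega>. (norm (X n \<omega>))\<^sup>2))
          + (T / real N) * (\<Sum>n<N. integral\<^sup>L M (\<lambda>\<omega>. (norm (U n \<omega>))\<^sup>2)))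
     + \<alpha> / 2 * integral\<^sup>L M (\<lambda>\<omega>. (norm (X N \<omega>))\<^sup>2)"

definition slq_optimal ::
  "'w measure \<Rightarrow> (real \<Rightarrow> 'w \<Rightarrow> real) \<Rightarrow> real \<Rightarrow> nat \<Rightarrow> real \<Rightarrow> ('v::euclidean_space \<Rightarrow> 'v \<Rightarrow> real)
   \<Rightarrow> 'v \<Rightarrow> (nat \<Rightarrow> 'v) \<Rightarrow> (nat \<Rightarrow> 'w \<Rightarrow> 'v) \<Rightarrow> (nat \<Rightarrow> 'w \<Rightarrow> 'v) \<Rightarrow> bool" where
  "slq_optimal M W T N \<alpha> a x0 r X U \<longleftrightarrow>
     slq_admissible M W T N a x0 r X U \<and>
     (\<forall>X' U'. slq_admissible M W T N a x0 r X' U' \<longrightarrow>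
        slq_cost M T N \<alpha> X U \<le> slq_cost M T N \<alpha> X' U')"

definition K_op ::
  "'w measure \<Rightarrow> (real \<Rightarrow> 'w \<Rightarrow> real) \<Rightarrow> real \<Rightarrow> nat \<Rightarrow> real \<Rightarrow> ('v::euclidean_space \<Rightarrow> 'v \<Rightarrow> real)
   \<Rightarrow> (nat \<Rightarrow> 'w \<Rightarrow> 'v) \<Rightarrow> nat \<Rightarrow> 'w \<Rightarrow> 'v" where
  "K_op M W T N \<alpha> a X n = (\<lambda>\<omega>.
     - (T / real N) *\<^sub>R vec_cond_exp M (W_filtration M W (tgrid T N n))
         (\<lambda>\<omega>'. \<Sum>j\<in>{n+1..N}. (A0 a (T / real N) ^^ (j - n))
                  ((\<Prod>k\<in>{n+2..j}. 1 + dW W T N k \<omega>') *\<^sub>R X j \<omega>')) \<omega>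
     - \<alpha> *\<^sub>R vec_cond_exp M (W_filtration M W (tgrid T N n))
         (\<lambda>\<omega>'. (A0 a (T / real N) ^^ (N - n))
                  ((\<Prod>k\<in>{n+2..N}. 1 + dW W T N k \<omega>') *\<^sub>R X N \<omega>')) \<omega>)"

end

theory Submission
  imports Defs
begin

lemma norm_sq_add_le: "(norm (x + y :: 'v::real_inner))\<^sup>2 \<le> 2 * (norm x)\<^sup>2 + 2 * (norm y)\<^sup>2"
proof -
  have "(norm (x + y))\<^sup>2 \<le> (norm x + norm y)\<^sup>2"
    by (rule power_mono[OF norm_triangle_ineq norm_ge_zero])
  also have "\<dots> \<le> 2 * (norm x)\<^sup>2 + 2 * (norm y)\<^sup>2"
    using sum_squares_bound[of "norm x" "norm y"] by (simp add: power2_eq_square algebra_simps)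
  finally show ?thesis .
qed

lemma inner_le_sq: "\<bar>(x::'v::real_inner) \<bullet> y\<bar> \<le> (norm x)\<^sup>2 + (norm y)\<^sup>2"
proof -
  have "\<bar>x \<bullet> y\<bar> \<le> norm x * norm y" by (rule Cauchy_Schwarz_ineq2)
  also have "\<dots> \<le> (norm x)\<^sup>2 + (norm y)\<^sup>2"
    using sum_squares_bound[of "norm x" "norm y"] mult_nonneg_nonneg[OF norm_ge_zero[of x] norm_ge_zero[of y]]
    unfolding power2_eq_square by linarith
  finally show ?thesis .
qed

lemma int_inner_sq:
  fixes f g :: "'w \<Rightarrow> 'v::euclidean_space"
  assumes "integrable M (\<lambda>\<omega>. (norm (f \<omega>))\<^sup>2)" "integrable M (\<lambda>\<omega>. (norm (g \<omega>))\<^sup>2)"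
    and [measurable]: "f \<in> borel_measurable M" "g \<in> borel_measurable M"
  shows "integrable M (\<lambda>\<omega>. f \<omega> \<bullet> g \<omega>)"
proof (rule Bochner_Integration.integrable_bound[of _ "\<lambda>\<omega>. (norm (f \<omega>))\<^sup>2 + (norm (g \<omega>))\<^sup>2"])
  show "integrable M (\<lambda>\<omega>. (norm (f \<omega>))\<^sup>2 + (norm (g \<omega>))\<^sup>2)" using assms(1,2) by (rule Bochner_Integration.integrable_add)
  show "(\<lambda>\<omega>. f \<omega> \<bullet> g \<omega>) \<in> borel_measurable M" by measurable
  show "AE \<omega> in M. norm (f \<omega> \<bullet> g \<omega>) \<le> norm ((norm (f \<omega>))\<^sup>2 + (norm (g \<omega>))\<^sup>2)"
    using inner_le_sq by auto
qed

lemma int_sq_add: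
  fixes f g :: "'w \<Rightarrow> 'v::euclidean_space"
  assumes "integrable M (\<lambda>\<omega>. (norm (f \<omega>))\<^sup>2)" "integrable M (\<lambda>\<omega>. (norm (g \<omega>))\<^sup>2)"
    and [measurable]: "f \<in> borel_measurable M" "g \<in> borel_measurable M"
  shows "integrable M (\<lambda>\<omega>. (norm (f \<omega> + g \<omega>))\<^sup>2)"
proof (rule Bochner_Integration.integrable_bound[of _ "\<lambda>\<omega>. 2 * (norm (f \<omega>))\<^sup>2 + 2 * (norm (g \<omega>))\<^sup>2"])
  show "integrable M (\<lambda>\<omega>. 2 * (norm (f \<omega>))\<^sup>2 + 2 * (norm (g \<omega>))\<^sup>2)" using assms(1,2) by auto
  show "(\<lambda>\<omega>. (norm (f \<omega> + g \<omega>))\<^sup>2) \<in> borel_measurable M" by measurable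
  show "AE \<omega> in M. norm ((norm (f \<omega> + g \<omega>))\<^sup>2) \<le> norm (2 * (norm (f \<omega>))\<^sup>2 + 2 * (norm (g \<omega>))\<^sup>2)"
    using norm_sq_add_le by auto
qed

lemma sq_expand:
  fixes f g :: "'w \<Rightarrow> 'v::euclidean_space"
  assumes "integrable M (\<lambda>\<omega>. (norm (f \<omega>))\<^sup>2)" "integrable M (\<lambda>\<omega>. (norm (g \<omega>))\<^sup>2)"
    and [measurable]: "f \<in> borel_measurable M" "g \<in> borel_measurable M"
  shows "integral\<^sup>L M (\<lambda>\<omega>. (norm (f \<omega> + e *\<^sub>R g \<omega>))\<^sup>2) =
     integral\<^sup>L M (\<lambda>\<omega>. (norm (f \<omega>))\<^sup>2) + 2 * e * integral\<^sup>L M (\<lambda>\<omega>. f \<omega> \<bullet> g \<omega>)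
     + e\<^sup>2 * integral\<^sup>L M (\<lambda>\<omega>. (norm (g \<omega>))\<^sup>2)"
proof -
  have fg: "integrable M (\<lambda>\<omega>. f \<omega> \<bullet> g \<omega>)" by (rule int_inner_sq[OF assms])
  have pw: "(norm (f \<omega> + e *\<^sub>R g \<omega>))\<^sup>2 = (norm (f \<omega>))\<^sup>2 + (2 * e) * (f \<omega> \<bullet> g \<omega>) + e\<^sup>2 * (norm (g \<omega>))\<^sup>2" for \<omega>
    unfolding power2_norm_eq_inner by (simp add: inner_add_left inner_add_right inner_commute algebra_simps power2_eq_square)
  have "integral\<^sup>L M (\<lambda>\<omega>. (norm (f \<omega> + e *\<^sub>R g \<omega>))\<^sup>2) =
      integral\<^sup>L M (\<lambda>\<omega>. (norm (f \<omega>))\<^sup>2 + (2 * e) * (f \<omega> \<bullet> g \<omega>) + e\<^sup>2 * (norm (g \<omega>))\<^sup>2)"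
    by (simp only: pw)
  also have "\<dots> = integral\<^sup>L M (\<lambda>\<omega>. (norm (f \<omega>))\<^sup>2) + integral\<^sup>L M (\<lambda>\<omega>. (2 * e) * (f \<omega> \<bullet> g \<omega>))
      + integral\<^sup>L M (\<lambda>\<omega>. e\<^sup>2 * (norm (g \<omega>))\<^sup>2)"
    using assms(1,2) fg by (simp add: Bochner_Integration.integral_add)
  also have "\<dots> = integral\<^sup>L M (\<lambda>\<omega>. (norm (f \<omega>))\<^sup>2) + 2 * e * integral\<^sup>L M (\<lambda>\<omega>. f \<omega> \<bullet> g \<omega>)
     + e\<^sup>2 * integral\<^sup>L M (\<lambda>\<omega>. (norm (g \<omega>))\<^sup>2)"
    by simp
  finally show ?thesis .
qed

lemma int_inner_bdd:
  fixes g phi :: "'w \<Rightarrow> 'v::euclidean_space"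
  assumes "integrable M g" "phi \<in> borel_measurable M" "\<And>\<omega>. norm (phi \<omega>) \<le> 1"
  shows "integrable M (\<lambda>\<omega>. g \<omega> \<bullet> phi \<omega>)"
proof (rule Bochner_Integration.integrable_bound[of _ "\<lambda>\<omega>. norm (g \<omega>)"])
  show "integrable M (\<lambda>\<omega>. norm (g \<omega>))" using assms(1) by auto
  have [measurable]: "g \<in> borel_measurable M" "phi \<in> borel_measurable M" using assms by auto
  show "(\<lambda>\<omega>. g \<omega> \<bullet> phi \<omega>) \<in> borel_measurable M" by measurable
  have "\<bar>g \<omega> \<bullet> phi \<omega>\<bar> \<le> norm (g \<omega>)" for \<omega>
  proof -
    have "\<bar>g \<omega> \<bullet> phi \<omega>\<bar> \<le> norm (g \<omega>) * norm (phi \<omega>)" by (rule Cauchy_Schwarz_ineq2)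
    also have "\<dots> \<le> norm (g \<omega>)" using assms(3)[of \<omega>] by (simp add: mult_left_le)
    finally show ?thesis .
  qed
  then show "AE \<omega> in M. norm (g \<omega> \<bullet> phi \<omega>) \<le> norm (norm (g \<omega>))" by simp
qed

lemma sq_int_imp_int:
  fixes f :: "'w \<Rightarrow> 'v::euclidean_space"
  assumes "finite_measure M" "integrable M (\<lambda>\<omega>. (norm (f \<omega>))\<^sup>2)" "f \<in> borel_measurable M"
  shows "integrable M f"
proof (rule Bochner_Integration.integrable_bound[of _ "\<lambda>\<omega>. 1 + (norm (f \<omega>))\<^sup>2"])
  interpret finite_measure M by (rule assms(1))
  show "integrable M (\<lambda>\<omega>. 1 + (norm (f \<omega>))\<^sup>2)" using assms(2) by auto
  show "f \<in> borel_measurable M" by (rule assms(3))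
  have "norm (f \<omega>) \<le> 1 + (norm (f \<omega>))\<^sup>2" for \<omega>
    using sum_squares_bound[of 1 "norm (f \<omega>)"] norm_ge_zero[of "f \<omega>"]
      mult_nonneg_nonneg[OF norm_ge_zero[of "f \<omega>"] norm_ge_zero[of "f \<omega>"]]
    unfolding power2_eq_square by linarith
  then show "AE \<omega> in M. norm (f \<omega>) \<le> norm (1 + (norm (f \<omega>))\<^sup>2)" by simp
qed

lemma grad_formD:
  assumes "grad_form a"
  shows "linear (\<lambda>y. a x y)" "linear (\<lambda>x. a x y)" "a x y = a y x" "x \<noteq> 0 \<Longrightarrow> a x x > 0"
proof -
  have b: "bilinear a" and s: "\<And>x y. a x y = a y x" and p: "\<And>x. x \<noteq> 0 \<Longrightarrow> a x x > 0"
    using assms unfolding grad_form_def by auto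
  from b show "linear (\<lambda>y. a x y)" "linear (\<lambda>x. a x y)" unfolding bilinear_def by auto
  show "a x y = a y x" by (rule s)
  show "x \<noteq> 0 \<Longrightarrow> a x x > 0" by (rule p)
qed

lemma disc_lap_inner:
  fixes a :: "'v::euclidean_space \<Rightarrow> 'v \<Rightarrow> real"
  assumes "grad_form a"
  shows "disc_lap a x \<bullet> y = - a x y"
proof -
  define c where "c = - (\<Sum>b\<in>Basis. a x b *\<^sub>R b)"
  have lin: "linear (\<lambda>y. a x y)" by (rule grad_formD(1)[OF assms])
  have c: "- (c \<bullet> phi) = a x phi" for phi
  proof -
    have "a x phi = a x (\<Sum>b\<in>Basis. (phi \<bullet> b) *\<^sub>R b)" by (simp add: euclidean_representation)
    also have "\<dots> = (\<Sum>b\<in>Basis. (phi \<bullet> b) * a x b)"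
      by (subst linear_sum[OF lin]) (simp add: linear_scale[OF lin])
    also have "\<dots> = (\<Sum>b\<in>Basis. a x b * (b \<bullet> phi))"
      by (rule sum.cong) (auto simp: inner_commute)
    also have "\<dots> = - (c \<bullet> phi)" unfolding c_def by (simp add: inner_sum_left)
    finally show ?thesis by simp
  qed
  have "disc_lap a x = c"
    unfolding disc_lap_def
  proof (rule the_equality)
    show "\<forall>phi. - (c \<bullet> phi) = a x phi" using c by auto
    fix y assume yp: "\<forall>phi. - (y \<bullet> phi) = a x phi"
    have "y \<bullet> b = c \<bullet> b" for b
    proof -
      have "- (y \<bullet> b) = a x b" using yp by blast
      then show ?thesis using c[of b] by linarith
    qed
    then show "y = c" by (rule euclidean_eqI)
  qed
  then show ?thesis using c[of y] by simp
qed

lemma disc_lap_linear: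
  fixes a :: "'v::euclidean_space \<Rightarrow> 'v \<Rightarrow> real"
  assumes "grad_form a"
  shows "linear (disc_lap a)"
proof (rule linearI)
  note l = grad_formD(2)[OF assms]
  fix x y :: 'v and c :: real
  show "disc_lap a (x + y) = disc_lap a x + disc_lap a y"
    by (rule euclidean_eqI) (simp add: disc_lap_inner[OF assms] inner_add_left linear_add[OF l])
  show "disc_lap a (c *\<^sub>R x) = c *\<^sub>R disc_lap a x"
    by (rule euclidean_eqI) (simp add: disc_lap_inner[OF assms] linear_scale[OF l])
qed

locale lapl =
  fixes a :: "'v::euclidean_space \<Rightarrow> 'v \<Rightarrow> real" and \<tau> :: real
  assumes ga: "grad_form a" and tpos: "\<tau> > 0"
begin

definition B where "B x = x - \<tau> *\<^sub>R disc_lap a x"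

lemma B_linear: "linear B"
  using disc_lap_linear[OF ga] unfolding B_def[abs_def]
  by (intro linearI) (auto simp: linear_add linear_scale algebra_simps)

lemma B_inner: "B x \<bullet> y = x \<bullet> y + \<tau> * a x y"
  unfolding B_def by (simp add: inner_diff_left disc_lap_inner[OF ga])

lemma B_inj: "inj B"
proof (rule linear_injective_0[OF B_linear, THEN iffD2], intro allI impI)
  fix x assume "B x = 0"
  then have "x \<bullet> x + \<tau> * a x x = 0" using B_inner[of x x] by simp
  moreover have "x \<noteq> 0 \<Longrightarrow> x \<bullet> x + \<tau> * a x x > 0"
    using grad_formD(4)[OF ga, of x] tpos by (simp add: add_pos_pos)
  ultimately show "x = 0" by fastforce
qed

lemma B_surj: "surj B"
  using linear_injective_imp_surjective[OF B_linear B_inj] by simp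

lemma A0_eq: "A0 a \<tau> = inv B"
  unfolding A0_def B_def[abs_def] ..

lemma B_A0: "B (A0 a \<tau> y) = y"
  unfolding A0_eq by (simp add: B_surj surj_f_inv_f)

lemma A0_B: "A0 a \<tau> (B x) = x"
  unfolding A0_eq by (simp add: B_inj)

lemma A0_linear: "linear (A0 a \<tau>)"
proof (rule linearI)
  fix x y :: 'v and c :: real
  show "A0 a \<tau> (x + y) = A0 a \<tau> x + A0 a \<tau> y"
  proof -
    have "B (A0 a \<tau> x + A0 a \<tau> y) = x + y" by (simp add: linear_add[OF B_linear] B_A0)
    then show ?thesis using A0_B[of "A0 a \<tau> x + A0 a \<tau> y"] by simp
  qed
  show "A0 a \<tau> (c *\<^sub>R x) = c *\<^sub>R A0 a \<tau> x"
  proof -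
    have "B (c *\<^sub>R A0 a \<tau> x) = c *\<^sub>R x" by (simp add: linear_scale[OF B_linear] B_A0)
    then show ?thesis using A0_B[of "c *\<^sub>R A0 a \<tau> x"] by simp
  qed
qed

lemma A0_sym: "A0 a \<tau> x \<bullet> y = x \<bullet> A0 a \<tau> y"
proof -
  let ?A = "A0 a \<tau>"
  have "?A x \<bullet> y = ?A x \<bullet> B (?A y)" by (simp add: B_A0)
  also have "\<dots> = B (?A y) \<bullet> ?A x" by (simp add: inner_commute)
  also have "\<dots> = ?A y \<bullet> ?A x + \<tau> * a (?A y) (?A x)" by (rule B_inner)
  also have "\<dots> = ?A x \<bullet> ?A y + \<tau> * a (?A x) (?A y)"
    using grad_formD(3)[OF ga] by (simp add: inner_commute)
  also have "\<dots> = B (?A x) \<bullet> ?A y" by (rule B_inner[symmetric])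
  finally show ?thesis by (simp add: B_A0)
qed

lemma Apow_linear: "linear (A0 a \<tau> ^^ m)"
  by (induction m) (auto simp: linear_id[unfolded id_def] intro: linear_compose[OF _ A0_linear, unfolded o_def])

lemma Apow_sym: "(A0 a \<tau> ^^ m) x \<bullet> y = x \<bullet> (A0 a \<tau> ^^ m) y"
proof (induction m arbitrary: y)
  case 0 then show ?case by simp
next
  case (Suc m)
  have "(A0 a \<tau> ^^ Suc m) x \<bullet> y = A0 a \<tau> ((A0 a \<tau> ^^ m) x) \<bullet> y" by simp
  also have "\<dots> = (A0 a \<tau> ^^ m) x \<bullet> A0 a \<tau> y" by (rule A0_sym)
  also have "\<dots> = x \<bullet> (A0 a \<tau> ^^ m) (A0 a \<tau> y)" by (rule Suc)
  also have "\<dots> = x \<bullet> (A0 a \<tau> ^^ Suc m) y" by (simp add: funpow_Suc_right del: funpow.simps)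
  finally show ?case .
qed

lemma Apow_scale: "(A0 a \<tau> ^^ m) (c *\<^sub>R x) = c *\<^sub>R (A0 a \<tau> ^^ m) x"
  using linear_scale[OF Apow_linear] .
lemma Apow_add: "(A0 a \<tau> ^^ m) (x + y) = (A0 a \<tau> ^^ m) x + (A0 a \<tau> ^^ m) y"
  using linear_add[OF Apow_linear] .
lemma Apow_sum: "(A0 a \<tau> ^^ m) (\<Sum>j\<in>S. f j) = (\<Sum>j\<in>S. (A0 a \<tau> ^^ m) (f j))"
  using linear_sum[OF Apow_linear] .

lemma Apow_meas[measurable]: "(A0 a \<tau> ^^ m) \<in> borel_measurable borel"
  by (intro borel_measurable_continuous_onI linear_continuous_on) (simp add: Apow_linear linear_linear)

lemma Apow_bound: obtains C where "C > 0" "\<And>x. norm ((A0 a \<tau> ^^ m) x) \<le> C * norm x"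
  using linear_bounded_pos[OF Apow_linear] by blast

lemma step_solve:
  assumes "y - x = \<tau> *\<^sub>R (disc_lap a y + u) + d *\<^sub>R (x + r)"
  shows "y = A0 a \<tau> ((1 + d) *\<^sub>R x + \<tau> *\<^sub>R u + d *\<^sub>R r)"
proof -
  have "B y = (1 + d) *\<^sub>R x + \<tau> *\<^sub>R u + d *\<^sub>R r"
    using assms unfolding B_def by (simp add: algebra_simps)
  then show ?thesis using A0_B[of y] by simp
qed

lemma step_check:
  assumes "y = A0 a \<tau> ((1 + d) *\<^sub>R x + \<tau> *\<^sub>R u + d *\<^sub>R r)"
  shows "y - x = \<tau> *\<^sub>R (disc_lap a y + u) + d *\<^sub>R (x + r)"
proof -
  have "B y = (1 + d) *\<^sub>R x + \<tau> *\<^sub>R u + d *\<^sub>R r" using assms B_A0 by simp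
  then show ?thesis unfolding B_def by (simp add: algebra_simps)
qed

end

locale setting =
  fixes M :: "'w measure" and W :: "real \<Rightarrow> 'w \<Rightarrow> real" and T :: real and N :: nat
  assumes ps: "prob_space M" and wp: "wiener_process M T W" and Tpos: "T > 0" and Npos: "N > 0"
begin

abbreviation "tau \<equiv> T / real N"
abbreviation "F n \<equiv> W_filtration M W (tgrid T N n)"

definition G where "G t = {W s -` B \<inter> space M | s B. s \<in> {0..t} \<and> B \<in> sets borel} \<union> null_sets M"

lemma tau_pos: "tau > 0" using Tpos Npos by simp

lemma tgrid_le: "n \<le> N \<Longrightarrow> tgrid T N n \<le> T"
  unfolding tgrid_def using Tpos Npos
  by (simp add: field_simps)

lemma tgrid_nonneg: "tgrid T N n \<ge> 0"
  unfolding tgrid_def using Tpos by simp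

lemma tgrid_mono: "m \<le> n \<Longrightarrow> tgrid T N m \<le> tgrid T N n"
  unfolding tgrid_def using Tpos Npos by (intro mult_right_mono) auto

lemma tgrid_Suc: "tgrid T N (Suc k) - tgrid T N k = tau"
  unfolding tgrid_def by (simp add: algebra_simps add_divide_distrib)

lemma W_meas: "s \<in> {0..T} \<Longrightarrow> W s \<in> borel_measurable M"
  using wp unfolding wiener_process_def by blast

lemma G_sets: "t \<le> T \<Longrightarrow> G t \<subseteq> sets M"
proof -
  assume t: "t \<le> T"
  have "W s -` B \<inter> space M \<in> sets M" if "s \<in> {0..t}" "B \<in> sets borel" for s B
    using W_meas[of s] that t measurable_sets by fastforce
  then show ?thesis unfolding G_def by (auto simp: null_sets_def)
qed

lemma G_Pow: "t \<le> T \<Longrightarrow> G t \<subseteq> Pow (space M)"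
  using G_sets sets.space_closed by blast

lemma sets_F: "t \<le> T \<Longrightarrow> sets (W_filtration M W t) = sigma_sets (space M) (G t)"
  unfolding W_filtration_def G_def[symmetric] by (rule sets_measure_of[OF G_Pow])

lemma space_F: "t \<le> T \<Longrightarrow> space (W_filtration M W t) = space M"
  unfolding W_filtration_def G_def[symmetric] by (rule space_measure_of[OF G_Pow])

lemma subalg_t: "t \<le> T \<Longrightarrow> subalgebra M (W_filtration M W t)"
  by (simp add: subalgebra_def space_F sets_F sets.sigma_sets_subset G_sets)

lemma filt_mono: "s \<le> t \<Longrightarrow> t \<le> T \<Longrightarrow> subalgebra (W_filtration M W t) (W_filtration M W s)"
proof -
  assume st: "s \<le> t" "t \<le> T"
  have "{W u -` B \<inter> space M | u B. u \<in> {0..s} \<and> B \<in> sets borel}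
     \<subseteq> {W u -` B \<inter> space M | u B. u \<in> {0..t} \<and> B \<in> sets borel}" using st by force
  then have "G s \<subseteq> G t" unfolding G_def by blast
  then show ?thesis using st
    by (simp add: subalgebra_def space_F sets_F sigma_sets_mono')
qed

lemma W_meas_F: "0 \<le> s \<Longrightarrow> s \<le> t \<Longrightarrow> t \<le> T \<Longrightarrow> W s \<in> borel_measurable (W_filtration M W t)"
proof -
  assume st: "0 \<le> s" "s \<le> t" "t \<le> T"
  show ?thesis
  proof (rule measurableI)
    fix x assume "x \<in> space (W_filtration M W t)" then show "W s x \<in> space borel" by simp
  next
    fix B :: "real set" assume "B \<in> sets borel"
    then have "W s -` B \<inter> space M \<in> {W u -` C \<inter> space M | u C. u \<in> {0..t} \<and> C \<in> sets borel}"
      using st by auto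
    then have "W s -` B \<inter> space M \<in> G t" unfolding G_def by (rule UnI1)
    then have "W s -` B \<inter> space M \<in> sigma_sets (space M) (G t)" by (rule sigma_sets.Basic)
    then show "W s -` B \<inter> space (W_filtration M W t) \<in> sets (W_filtration M W t)"
      using sets_F[OF st(3)] space_F[OF st(3)] by simp
  qed
qed

lemma subalg: "n \<le> N \<Longrightarrow> subalgebra M (F n)"
  using subalg_t tgrid_le by blast

lemma meas_mono: "m \<le> n \<Longrightarrow> n \<le> N \<Longrightarrow> f \<in> measurable (F m) K \<Longrightarrow> f \<in> measurable (F n) K"
  by (rule measurable_from_subalg[OF filt_mono[OF tgrid_mono tgrid_le]])

lemma F_to_M: "n \<le> N \<Longrightarrow> f \<in> measurable (F n) K \<Longrightarrow> f \<in> measurable M K"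
  by (rule measurable_from_subalg[OF subalg])

lemma dW_meas: "1 \<le> k \<Longrightarrow> k \<le> n \<Longrightarrow> n \<le> N \<Longrightarrow> dW W T N k \<in> borel_measurable (F n)"
proof -
  assume k: "1 \<le> k" "k \<le> n" "n \<le> N"
  have a: "W (tgrid T N k) \<in> borel_measurable (F n)"
    by (rule W_meas_F) (use k tgrid_nonneg tgrid_mono tgrid_le in auto)
  have b: "W (tgrid T N (k - 1)) \<in> borel_measurable (F n)"
    by (rule W_meas_F) (use k tgrid_nonneg tgrid_mono tgrid_le in auto)
  show ?thesis unfolding dW_def[abs_def] using a b by measurable
qed

lemma sfs: "n \<le> N \<Longrightarrow> sigma_finite_subalgebra M (F n)"
  by (rule finite_measure_subalgebra_is_sigma_finite)
     (use ps in \<open>simp add: finite_measure_subalgebra_def finite_measure_subalgebra_axioms_def subalg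
        prob_space_def\<close>)

lemma dW_dist: "1 \<le> k \<Longrightarrow> k \<le> N \<Longrightarrow>
   distributed M lborel (dW W T N k) (\<lambda>x. ennreal (normal_density 0 (sqrt tau) x))"
proof -
  assume k: "1 \<le> k" "k \<le> N"
  have s: "0 \<le> tgrid T N (k - 1)" using tgrid_nonneg .
  have st: "tgrid T N (k - 1) < tgrid T N k" using tgrid_Suc[of "k - 1"] k tau_pos by simp
  have t: "tgrid T N k \<le> T" using tgrid_le k by simp
  have "tgrid T N k - tgrid T N (k - 1) = tau" using tgrid_Suc[of "k - 1"] k by simp
  moreover have "\<forall>s t. 0 \<le> s \<longrightarrow> s < t \<longrightarrow> t \<le> T \<longrightarrow>
        distributed M lborel (\<lambda>\<omega>. W t \<omega> - W s \<omega>)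
          (\<lambda>x. ennreal (normal_density 0 (sqrt (t - s)) x))"
    using wp unfolding wiener_process_def by blast
  ultimately have d: "distributed M lborel (\<lambda>\<omega>. W (tgrid T N k) \<omega> - W (tgrid T N (k-1)) \<omega>)
     (\<lambda>x. ennreal (normal_density 0 (sqrt (tgrid T N k - tgrid T N (k - 1))) x))"
    using s st t by blast
  show ?thesis using d unfolding \<open>tgrid T N k - tgrid T N (k - 1) = tau\<close> dW_def[abs_def] .
qed

lemma sq_int: "1 \<le> k \<Longrightarrow> k \<le> N \<Longrightarrow> integrable M (\<lambda>\<omega>. (1 + dW W T N k \<omega>)\<^sup>2)"
proof -
  assume k: "1 \<le> k" "k \<le> N"
  define s where "s = sqrt tau"
  have s: "s > 0" unfolding s_def using tau_pos by simp
  have i0: "integrable lborel (\<lambda>x. normal_density 0 s x)"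
    using integrable.intros[OF normal_moment_even[OF s, where k=0 and \<mu>=0]] by simp
  have i1: "integrable lborel (\<lambda>x. normal_density 0 s x * x)"
    using integrable.intros[OF normal_moment_odd[OF s, where k=0 and \<mu>=0]] by simp
  have i2: "integrable lborel (\<lambda>x. normal_density 0 s x * x\<^sup>2)"
    using integrable.intros[OF normal_moment_even[OF s, where k=1 and \<mu>=0]] by simp
  have "integrable lborel (\<lambda>x. normal_density 0 s x * (1 + x)\<^sup>2)"
  proof -
    have "integrable lborel (\<lambda>x. normal_density 0 s x + 2 * (normal_density 0 s x * x) + normal_density 0 s x * x\<^sup>2)"
      using i0 i1 i2 by auto
    then show ?thesis by (simp add: power2_eq_square algebra_simps)
  qed
  then show ?thesis
    using distributed_integrable[OF dW_dist[OF k, folded s_def], of "\<lambda>x. (1 + x)\<^sup>2"]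
    by (simp add: normal_density_nonneg)
qed

definition "D l \<omega> = W (tgrid T N (Suc l)) \<omega> - W (tgrid T N l) \<omega>"

lemma indep_D: "prob_space.indep_vars M (\<lambda>_. borel) D {..<N}"
proof -
  have "0 \<le> tgrid T N 0" "tgrid T N N \<le> T" "\<forall>i<N. tgrid T N i < tgrid T N (Suc i)"
    using tgrid_nonneg tgrid_le tgrid_Suc tau_pos by (auto simp: algebra_simps)
  then show ?thesis using wp unfolding wiener_process_def D_def[abs_def] by blast
qed

lemma D_dW: "D l = dW W T N (Suc l)"
  unfolding D_def[abs_def] dW_def[abs_def] by simp

lemma P_sq_int: "j \<le> N \<Longrightarrow> integrable M (\<lambda>\<omega>. (\<Prod>k\<in>{i+2..j}. 1 + dW W T N k \<omega>)\<^sup>2)"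
proof -
  assume j: "j \<le> N"
  interpret prob_space M by (rule ps)
  have ind: "indep_vars (\<lambda>_. borel) (\<lambda>l \<omega>. (1 + D l \<omega>)\<^sup>2) {i+1..<j}"
  proof -
    have "indep_vars (\<lambda>_. borel) (\<lambda>l \<omega>. (\<lambda>x. (1 + x)\<^sup>2) (D l \<omega>)) {..<N}"
      by (rule indep_vars_compose2[OF indep_D]) simp
    then show ?thesis by (rule indep_vars_subset) (use j in auto)
  qed
  have "integrable M (\<lambda>\<omega>. \<Prod>l\<in>{i+1..<j}. (1 + D l \<omega>)\<^sup>2)"
    by (rule indep_vars_integrable[OF _ ind]) (use j sq_int in \<open>auto simp: D_dW\<close>)
  moreover have "(\<Prod>l\<in>{i+1..<j}. (1 + D l \<omega>)\<^sup>2) = (\<Prod>k\<in>{i+2..j}. 1 + dW W T N k \<omega>)\<^sup>2" for \<omega>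
  proof -
    have "{i+2..j} = Suc ` {i+1..<j}" by (simp add: image_Suc_atLeastLessThan atLeastLessThanSuc_atLeastAtMost)
    then have "(\<Prod>k\<in>{i+2..j}. (1 + dW W T N k \<omega>)\<^sup>2) = (\<Prod>k\<in>Suc ` {i+1..<j}. (1 + dW W T N k \<omega>)\<^sup>2)"
      by (simp only:)
    also have "\<dots> = (\<Prod>l\<in>{i+1..<j}. (1 + dW W T N (Suc l) \<omega>)\<^sup>2)"
      by (rule prod.reindex[of Suc, unfolded o_def]) simp
    finally show ?thesis by (simp add: D_dW prod_power_distrib)
  qed
  ultimately show ?thesis by simp
qed

lemma P_meas: "j \<le> n \<Longrightarrow> n \<le> N \<Longrightarrow> (\<lambda>\<omega>. \<Prod>k\<in>{i+2..j}. 1 + dW W T N k \<omega>) \<in> borel_measurable (F n)"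
proof -
  assume jn: "j \<le> n" "n \<le> N"
  have [measurable]: "k \<in> {i+2..j} \<Longrightarrow> dW W T N k \<in> borel_measurable (F n)" for k
    using dW_meas jn by simp
  show ?thesis by measurable
qed

end

lemma vce_meas: "vec_cond_exp M F G \<in> borel_measurable F"
  unfolding vec_cond_exp_def by measurable

lemma vce_meas2: "vec_cond_exp M F G \<in> borel_measurable M"
  unfolding vec_cond_exp_def by measurable

lemma vce_int:
  fixes G :: "'w \<Rightarrow> 'v::euclidean_space"
  assumes "sigma_finite_subalgebra M F" "integrable M G"
  shows "integrable M (vec_cond_exp M F G)"
proof -
  interpret sigma_finite_subalgebra M F by (rule assms(1))
  show ?thesis unfolding vec_cond_exp_def
    by (rule Bochner_Integration.integrable_sum, rule integrable_scaleR_left, rule real_cond_exp_int(1))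
       (use assms(2) in auto)
qed

lemma vce_inner:
  fixes G :: "'w \<Rightarrow> 'v::euclidean_space"
  assumes sfs: "sigma_finite_subalgebra M F" and G: "integrable M G"
    and phi[measurable]: "phi \<in> borel_measurable F" and bnd: "\<And>\<omega>. norm (phi \<omega>) \<le> 1"
  shows "integral\<^sup>L M (\<lambda>\<omega>. vec_cond_exp M F G \<omega> \<bullet> phi \<omega>) = integral\<^sup>L M (\<lambda>\<omega>. G \<omega> \<bullet> phi \<omega>)"
proof -
  interpret sigma_finite_subalgebra M F by (rule sfs)
  have phiM[measurable]: "phi \<in> borel_measurable M" by (rule measurable_from_subalg[OF subalg phi])
  have GM[measurable]: "G \<in> borel_measurable M" using G by auto
  have ib: "integrable M (\<lambda>x. (phi x \<bullet> b) * (G x \<bullet> b))" if b: "b \<in> Basis" for b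
  proof (rule Bochner_Integration.integrable_bound[of _ "\<lambda>x. G x \<bullet> b"])
    show "integrable M (\<lambda>x. G x \<bullet> b)" using G by auto
    show "(\<lambda>x. (phi x \<bullet> b) * (G x \<bullet> b)) \<in> borel_measurable M" by measurable
    have "\<bar>phi x \<bullet> b\<bar> \<le> 1" for x using Basis_le_norm[OF b, of "phi x"] bnd[of x] by linarith
    then show "AE x in M. norm ((phi x \<bullet> b) * (G x \<bullet> b)) \<le> norm (G x \<bullet> b)"
      by (auto simp: abs_mult intro!: mult_left_le_one_le)
  qed
  have e1: "vec_cond_exp M F G \<omega> \<bullet> phi \<omega> = (\<Sum>b\<in>Basis. (phi \<omega> \<bullet> b) * real_cond_exp M F (\<lambda>\<omega>'. G \<omega>' \<bullet> b) \<omega>)" for \<omega>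
    unfolding vec_cond_exp_def inner_sum_left inner_scaleR_left
    by (rule sum.cong[OF refl]) (metis inner_commute mult.commute)
  have e2: "G \<omega> \<bullet> phi \<omega> = (\<Sum>b\<in>Basis. (phi \<omega> \<bullet> b) * (G \<omega> \<bullet> b))" for \<omega>
    by (subst euclidean_inner) (simp add: mult.commute)
  have "integral\<^sup>L M (\<lambda>\<omega>. vec_cond_exp M F G \<omega> \<bullet> phi \<omega>)
      = (\<Sum>b\<in>Basis. integral\<^sup>L M (\<lambda>\<omega>. (phi \<omega> \<bullet> b) * real_cond_exp M F (\<lambda>\<omega>'. G \<omega>' \<bullet> b) \<omega>))"
    unfolding e1 by (rule Bochner_Integration.integral_sum) (rule real_cond_exp_intg(1)[OF ib], assumption, measurable)
  also have "\<dots> = (\<Sum>b\<in>Basis. integral\<^sup>L M (\<lambda>\<omega>. (phi \<omega> \<bullet> b) * (G \<omega> \<bullet> b)))"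
    by (rule sum.cong[OF refl]) (rule real_cond_exp_intg(2)[OF ib], assumption, measurable)
  also have "\<dots> = integral\<^sup>L M (\<lambda>\<omega>. G \<omega> \<bullet> phi \<omega>)"
    unfolding e2 by (rule Bochner_Integration.integral_sum[symmetric]) (rule ib)
  finally show ?thesis .
qed

context lapl begin

abbreviation "A \<equiv> A0 a \<tau>"

lemma A_Apow: "A ((A ^^ k) v) = (A ^^ Suc k) v" by simp

lemma prodSuc: "j \<le> Suc m \<Longrightarrow> (\<Prod>k\<in>{j..Suc m}. f k) = (f (Suc m) :: real) * (\<Prod>k\<in>{j..m}. f k)"
  by (simp add: atLeastAtMostSuc_conv)

lemma unroll:
  assumes "\<And>n. n < m \<Longrightarrow> x (Suc n) = A ((1 + d (Suc n)) *\<^sub>R x n + \<tau> *\<^sub>R u n + d (Suc n) *\<^sub>R r n)"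
  shows "x m = (A ^^ m) ((\<Prod>j\<in>{1..m}. 1 + d j) *\<^sub>R x 0)
     + \<tau> *\<^sub>R (\<Sum>j<m. (A ^^ (m - j)) ((\<Prod>k\<in>{j+2..m}. 1 + d k) *\<^sub>R u j))
     + (\<Sum>j<m. (A ^^ (m - j)) ((\<Prod>k\<in>{j+2..m}. 1 + d k) *\<^sub>R (d (j+1) *\<^sub>R r j)))"
  using assms
proof (induction m)
  case 0
  then show ?case by simp
next
  case (Suc m)
  define c where "c = 1 + d (Suc m)"
  let ?p = "\<lambda>m. (\<Prod>j\<in>{1..m}. 1 + d j)"
  let ?q = "\<lambda>j m. (\<Prod>k\<in>{j+2..m}. 1 + d k)"
  have IH: "x m = (A ^^ m) (?p m *\<^sub>R x 0)
     + \<tau> *\<^sub>R (\<Sum>j<m. (A ^^ (m - j)) (?q j m *\<^sub>R u j))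
     + (\<Sum>j<m. (A ^^ (m - j)) (?q j m *\<^sub>R (d (j+1) *\<^sub>R r j)))"
    using Suc.IH Suc.prems by simp
  have xs: "x (Suc m) = A (c *\<^sub>R x m + \<tau> *\<^sub>R u m + d (Suc m) *\<^sub>R r m)"
    using Suc.prems[of m] unfolding c_def by simp
  have lA: "linear A" by (rule A0_linear)
  have p: "?p (Suc m) = c * ?p m" unfolding c_def by (rule prodSuc) simp
  have q: "j < m \<Longrightarrow> ?q j (Suc m) = c * ?q j m" for j unfolding c_def by (rule prodSuc) simp
  have q1: "?q m (Suc m) = 1" by simp
  have t1: "A (c *\<^sub>R (A ^^ m) (?p m *\<^sub>R x 0)) = (A ^^ Suc m) (?p (Suc m) *\<^sub>R x 0)"
  proof -
    have "A (c *\<^sub>R (A ^^ m) (?p m *\<^sub>R x 0)) = A ((A ^^ m) ((c * ?p m) *\<^sub>R x 0))"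
      by (simp add: Apow_scale)
    also have "\<dots> = (A ^^ Suc m) (?p (Suc m) *\<^sub>R x 0)" by (simp only: p funpow.simps(2) comp_apply)
    finally show ?thesis .
  qed
  have t2: "A (c *\<^sub>R (\<Sum>j<m. (A ^^ (m - j)) (?q j m *\<^sub>R v j))) + A (w *\<^sub>R v m)
      = (\<Sum>j<Suc m. (A ^^ (Suc m - j)) (?q j (Suc m) *\<^sub>R v j))" if "w = 1" for v w
  proof -
    have "A (c *\<^sub>R (\<Sum>j<m. (A ^^ (m - j)) (?q j m *\<^sub>R v j)))
        = (\<Sum>j<m. A (c *\<^sub>R (A ^^ (m - j)) (?q j m *\<^sub>R v j)))"
      by (simp add: linear_scale[OF lA] linear_sum[OF lA] scaleR_sum_right)
    also have "\<dots> = (\<Sum>j<m. (A ^^ (Suc m - j)) (?q j (Suc m) *\<^sub>R v j))"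
    proof (rule sum.cong[OF refl])
      fix j assume "j \<in> {..<m}"
      then have j: "j < m" by simp
      then have "Suc m - j = Suc (m - j)" by simp
      then show "A (c *\<^sub>R (A ^^ (m - j)) (?q j m *\<^sub>R v j)) = (A ^^ (Suc m - j)) (?q j (Suc m) *\<^sub>R v j)"
        using q[OF j] by (simp add: Apow_scale linear_scale[OF lA])
    qed
    finally show ?thesis using that q1 by simp
  qed
  have "x (Suc m) = A (c *\<^sub>R (A ^^ m) (?p m *\<^sub>R x 0))
      + \<tau> *\<^sub>R (A (c *\<^sub>R (\<Sum>j<m. (A ^^ (m - j)) (?q j m *\<^sub>R u j))) + A (1 *\<^sub>R u m))
      + (A (c *\<^sub>R (\<Sum>j<m. (A ^^ (m - j)) (?q j m *\<^sub>R (d (j+1) *\<^sub>R r j)))) + A (1 *\<^sub>R (d (Suc m) *\<^sub>R r m)))"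
    unfolding xs IH by (simp add: linear_add[OF lA] linear_scale[OF lA] scaleR_add_right algebra_simps)
  also have "\<dots> = (A ^^ Suc m) (?p (Suc m) *\<^sub>R x 0)
     + \<tau> *\<^sub>R (\<Sum>j<Suc m. (A ^^ (Suc m - j)) (?q j (Suc m) *\<^sub>R u j))
     + (\<Sum>j<Suc m. (A ^^ (Suc m - j)) (?q j (Suc m) *\<^sub>R (d (j+1) *\<^sub>R r j)))"
    unfolding t1 using t2[of 1 u] t2[of 1 "\<lambda>j. d (j+1) *\<^sub>R r j"] by simp
  finally show ?case .
qed

end

locale main = setting M W T N for M :: "'w measure" and W T N +
  fixes a :: "'v::euclidean_space \<Rightarrow> 'v \<Rightarrow> real" and \<alpha> :: real and x0 :: 'v and r :: "nat \<Rightarrow> 'v"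
    and X U :: "nat \<Rightarrow> 'w \<Rightarrow> 'v"
  assumes gaa: "grad_form a" and alpha: "\<alpha> \<ge> 0" and opt: "slq_optimal M W T N \<alpha> a x0 r X U"
begin

sublocale L: lapl a "T / real N" using gaa tau_pos by unfold_locales

abbreviation "AA \<equiv> A0 a (T / real N)"

lemma adm: "slq_admissible M W T N a x0 r X U"
  using opt unfolding slq_optimal_def by blast

lemma U_meas: "n < N \<Longrightarrow> U n \<in> borel_measurable (F n)"
  using adm unfolding slq_admissible_def by blast
lemma U_sq: "n < N \<Longrightarrow> integrable M (\<lambda>\<omega>. (norm (U n \<omega>))\<^sup>2)"
  using adm unfolding slq_admissible_def by blast
lemma X_meas: "n \<le> N \<Longrightarrow> X n \<in> borel_measurable (F n)"
  using adm unfolding slq_admissible_def by blast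
lemma X_sq: "n \<le> N \<Longrightarrow> integrable M (\<lambda>\<omega>. (norm (X n \<omega>))\<^sup>2)"
  using adm unfolding slq_admissible_def by blast
lemma X_0: "\<omega> \<in> space M \<Longrightarrow> X 0 \<omega> = x0"
  using adm unfolding slq_admissible_def by blast
lemma X_rec: "n < N \<Longrightarrow> \<omega> \<in> space M \<Longrightarrow> X (Suc n) \<omega> - X n \<omega> =
          tau *\<^sub>R (disc_lap a (X (Suc n) \<omega>) + U n \<omega>)
          + dW W T N (Suc n) \<omega> *\<^sub>R (X n \<omega> + r n)"
  using adm unfolding slq_admissible_def by blast

lemma mild:
  assumes n: "n < N" and w: "\<omega> \<in> space M"
  shows "X (Suc n) \<omega> =
              (AA ^^ (n + 1))
                 ((\<Prod>j\<in>{1..n+1}. 1 + dW W T N j \<omega>) *\<^sub>R X 0 \<omega>)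
            + tau *\<^sub>R (\<Sum>j\<in>{0..n}. (AA ^^ (n + 1 - j))
                 ((\<Prod>k\<in>{j+2..n+1}. 1 + dW W T N k \<omega>) *\<^sub>R U j \<omega>))
            + (\<Sum>j\<in>{0..n}. (AA ^^ (n + 1 - j))
                 ((\<Prod>k\<in>{j+2..n+1}. 1 + dW W T N k \<omega>) *\<^sub>R (dW W T N (j + 1) \<omega> *\<^sub>R r j)))"
proof -
  have "X (Suc n) \<omega> = (AA ^^ (Suc n)) ((\<Prod>j\<in>{1..Suc n}. 1 + dW W T N j \<omega>) *\<^sub>R X 0 \<omega>)
     + tau *\<^sub>R (\<Sum>j<Suc n. (AA ^^ (Suc n - j)) ((\<Prod>k\<in>{j+2..Suc n}. 1 + dW W T N k \<omega>) *\<^sub>R U j \<omega>))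
     + (\<Sum>j<Suc n. (AA ^^ (Suc n - j)) ((\<Prod>k\<in>{j+2..Suc n}. 1 + dW W T N k \<omega>) *\<^sub>R (dW W T N (j+1) \<omega> *\<^sub>R r j)))"
  proof (rule L.unroll[where x="\<lambda>m. X m \<omega>" and u="\<lambda>m. U m \<omega>" and d="\<lambda>m. dW W T N m \<omega>"])
    fix m assume "m < Suc n"
    then have "m < N" using n by simp
    show "X (Suc m) \<omega> = AA ((1 + dW W T N (Suc m) \<omega>) *\<^sub>R X m \<omega> + tau *\<^sub>R U m \<omega> + dW W T N (Suc m) \<omega> *\<^sub>R r m)"
      by (rule L.step_solve) (rule X_rec[OF \<open>m < N\<close> w])
  qed
  then show ?thesis by (simp add: lessThan_Suc_atMost atLeast0AtMost)
qed

end

locale pert = main M W T N a \<alpha> x0 r X U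
  for M :: "'w measure" and W T N and a :: "'v::euclidean_space \<Rightarrow> 'v \<Rightarrow> real" and \<alpha> x0 r X U +
  fixes i :: nat and phi :: "'w \<Rightarrow> 'v"
  assumes iN: "i < N" and phi_meas: "phi \<in> borel_measurable (W_filtration M W (tgrid T N i))" and phi_bnd: "\<And>\<omega>. norm (phi \<omega>) \<le> 1"
begin

definition "P j \<omega> = (\<Prod>k\<in>{i+2..j}. 1 + dW W T N k \<omega>)"
definition "dX j \<omega> = (if j \<le> i then 0 else tau *\<^sub>R (AA ^^ (j - i)) (P j \<omega> *\<^sub>R phi \<omega>))"
definition "dU n \<omega> = (if n = i then phi \<omega> else 0)"

lemma P_meas': "j \<le> n \<Longrightarrow> n \<le> N \<Longrightarrow> P j \<in> borel_measurable (F n)"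
  unfolding P_def[abs_def] by (rule P_meas)

lemma P_sq: "j \<le> N \<Longrightarrow> integrable M (\<lambda>\<omega>. (P j \<omega>)\<^sup>2)"
  unfolding P_def by (rule P_sq_int)

lemma dX_meas: "n \<le> N \<Longrightarrow> dX n \<in> borel_measurable (F n)"
proof (cases "n \<le> i")
  case True then show ?thesis unfolding dX_def[abs_def] by simp
next
  case False
  assume nN: "n \<le> N"
  have [measurable]: "P n \<in> borel_measurable (F n)" by (rule P_meas'[OF order.refl nN])
  have [measurable]: "phi \<in> borel_measurable (F n)" by (rule meas_mono[OF _ nN phi_meas]) (use False in simp)
  show ?thesis using False unfolding dX_def[abs_def] by simp
qed

lemma dU_meas: "n < N \<Longrightarrow> dU n \<in> borel_measurable (F n)"
  unfolding dU_def[abs_def] using phi_meas by (cases "n = i") auto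

lemma dX_M: "n \<le> N \<Longrightarrow> dX n \<in> borel_measurable M"
  by (rule F_to_M[OF _ dX_meas])
lemma dU_M: "n < N \<Longrightarrow> dU n \<in> borel_measurable M"
  by (rule F_to_M[OF _ dU_meas]) auto
lemma X_M: "n \<le> N \<Longrightarrow> X n \<in> borel_measurable M"
  by (rule F_to_M[OF _ X_meas])
lemma U_M: "n < N \<Longrightarrow> U n \<in> borel_measurable M"
  by (rule F_to_M[OF _ U_meas]) auto
lemma phi_M: "phi \<in> borel_measurable M"
  by (rule F_to_M[OF _ phi_meas]) (use iN in auto)

lemma dU_sq: "integrable M (\<lambda>\<omega>. (norm (dU n \<omega>))\<^sup>2)"
proof -
  interpret prob_space M by (rule ps)
  have [measurable]: "phi \<in> borel_measurable M" by (rule phi_M)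
  show ?thesis
  proof (rule Bochner_Integration.integrable_bound[of _ "\<lambda>\<omega>. 1::real"])
    show "integrable M (\<lambda>\<omega>. 1::real)" by simp
    show "(\<lambda>\<omega>. (norm (dU n \<omega>))\<^sup>2) \<in> borel_measurable M" unfolding dU_def by (cases "n = i") simp_all
    have "(norm (dU n \<omega>))\<^sup>2 \<le> 1" for \<omega>
      unfolding dU_def using phi_bnd[of \<omega>] by (simp add: abs_square_le_1)
    then show "AE \<omega> in M. norm ((norm (dU n \<omega>))\<^sup>2) \<le> norm (1::real)" by simp
  qed
qed

lemma dX_sq: "n \<le> N \<Longrightarrow> integrable M (\<lambda>\<omega>. (norm (dX n \<omega>))\<^sup>2)"
proof -
  assume nN: "n \<le> N"
  obtain C where C: "C > 0" "\<And>x. norm ((AA ^^ (n - i)) x) \<le> C * norm x" using L.Apow_bound[of "n - i"] by blast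
  have [measurable]: "dX n \<in> borel_measurable M" by (rule dX_M[OF nN])
  have [measurable]: "P n \<in> borel_measurable M" by (rule F_to_M[OF nN P_meas'[OF order.refl nN]])
  show ?thesis
  proof (rule Bochner_Integration.integrable_bound[of _ "\<lambda>\<omega>. (tau * C)\<^sup>2 * (P n \<omega>)\<^sup>2"])
    show "integrable M (\<lambda>\<omega>. (tau * C)\<^sup>2 * (P n \<omega>)\<^sup>2)" using P_sq[OF nN] by simp
    show "(\<lambda>\<omega>. (norm (dX n \<omega>))\<^sup>2) \<in> borel_measurable M" by measurable
    have "norm (dX n \<omega>) \<le> tau * C * \<bar>P n \<omega>\<bar>" for \<omega>
    proof (cases "n \<le> i")
      case True
      have "0 \<le> tau * C * \<bar>P n \<omega>\<bar>"
        using mult_nonneg_nonneg[OF mult_nonneg_nonneg[OF less_imp_le[OF tau_pos] less_imp_le[OF C(1)]] abs_ge_zero] .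
      then show ?thesis using True unfolding dX_def by simp
    next
      case False
      have "norm (dX n \<omega>) = tau * norm ((AA ^^ (n - i)) (P n \<omega> *\<^sub>R phi \<omega>))"
        using False tau_pos Tpos unfolding dX_def by simp
      also have "\<dots> \<le> tau * (C * norm (P n \<omega> *\<^sub>R phi \<omega>))"
        by (rule mult_left_mono[OF C(2) less_imp_le[OF tau_pos]])
      also have "\<dots> = tau * C * (\<bar>P n \<omega>\<bar> * norm (phi \<omega>))" by simp
      also have "\<dots> \<le> tau * C * \<bar>P n \<omega>\<bar>"
      proof (rule mult_left_mono)
        show "\<bar>P n \<omega>\<bar> * norm (phi \<omega>) \<le> \<bar>P n \<omega>\<bar>" using phi_bnd[of \<omega>] by (simp add: mult_left_le)
        show "0 \<le> tau * C" using mult_nonneg_nonneg[OF less_imp_le[OF tau_pos] less_imp_le[OF C(1)]] .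
      qed
      finally show ?thesis .
    qed
    then have "(norm (dX n \<omega>))\<^sup>2 \<le> (tau * C)\<^sup>2 * (P n \<omega>)\<^sup>2" for \<omega>
    proof -
      have "(norm (dX n \<omega>))\<^sup>2 \<le> (tau * C * \<bar>P n \<omega>\<bar>)\<^sup>2"
        by (rule power_mono[OF \<open>norm (dX n \<omega>) \<le> tau * C * \<bar>P n \<omega>\<bar>\<close> norm_ge_zero])
      also have "(tau * C * \<bar>P n \<omega>\<bar>)\<^sup>2 = (tau * C)\<^sup>2 * (P n \<omega>)\<^sup>2"
        by (simp only: power_mult_distrib power2_abs)
      finally show ?thesis .
    qed
    then show "AE \<omega> in M. norm ((norm (dX n \<omega>))\<^sup>2) \<le> norm ((tau * C)\<^sup>2 * (P n \<omega>)\<^sup>2)" by simp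
  qed
qed

lemma dX_0: "dX 0 = (\<lambda>\<omega>. 0)"
  unfolding dX_def[abs_def] by simp

lemma dX_rec:
  assumes "n < N"
  shows "dX (Suc n) \<omega> = AA ((1 + dW W T N (Suc n) \<omega>) *\<^sub>R dX n \<omega> + tau *\<^sub>R dU n \<omega> + dW W T N (Suc n) \<omega> *\<^sub>R 0)"
proof -
  have lA: "linear AA" by (rule L.A0_linear)
  consider "n < i" | "n = i" | "n > i" by linarith
  then show ?thesis
  proof cases
    case 1 then show ?thesis unfolding dX_def dU_def using linear_0[OF lA] by simp
  next
    case 2 then show ?thesis unfolding dX_def dU_def P_def by (simp add: linear_scale[OF lA])
  next
    case 3
    have Ps: "P (Suc n) \<omega> = (1 + dW W T N (Suc n) \<omega>) * P n \<omega>"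
      unfolding P_def by (rule L.prodSuc) (use 3 in simp)
    have sn: "Suc n - i = Suc (n - i)" using 3 by simp
    show ?thesis using 3 unfolding dX_def dU_def sn Ps
      by (simp add: linear_scale[OF lA] L.Apow_scale)
  qed
qed

definition "Xp e n \<omega> = X n \<omega> + e *\<^sub>R dX n \<omega>"
definition "Up e n \<omega> = U n \<omega> + e *\<^sub>R dU n \<omega>"

lemma sq_scale: "integrable M (\<lambda>\<omega>. (norm (f \<omega>))\<^sup>2) \<Longrightarrow> integrable M (\<lambda>\<omega>. (norm (e *\<^sub>R f \<omega>))\<^sup>2)"
  by (simp add: power_mult_distrib)

lemma adm': "slq_admissible M W T N a x0 r (Xp e) (Up e)"
  unfolding slq_admissible_def
proof (intro conjI allI impI ballI)
  fix n assume n: "n < N"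
  have [measurable]: "U n \<in> borel_measurable (F n)" "dU n \<in> borel_measurable (F n)"
    using U_meas[OF n] dU_meas[OF n] by auto
  show "Up e n \<in> borel_measurable (F n)" unfolding Up_def[abs_def] by measurable
  show "integrable M (\<lambda>\<omega>. (norm (Up e n \<omega>))\<^sup>2)" unfolding Up_def
    by (rule int_sq_add[OF U_sq[OF n] sq_scale[OF dU_sq] U_M[OF n]]) (use dU_M[OF n] in measurable)
next
  fix n assume n: "n \<le> N"
  have [measurable]: "X n \<in> borel_measurable (F n)" "dX n \<in> borel_measurable (F n)"
    using X_meas[OF n] dX_meas[OF n] by auto
  show "Xp e n \<in> borel_measurable (F n)" unfolding Xp_def[abs_def] by measurable
  show "integrable M (\<lambda>\<omega>. (norm (Xp e n \<omega>))\<^sup>2)" unfolding Xp_def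
    by (rule int_sq_add[OF X_sq[OF n] sq_scale[OF dX_sq[OF n]] X_M[OF n]]) (use dX_M[OF n] in measurable)
next
  fix \<omega> assume "\<omega> \<in> space M"
  then show "Xp e 0 \<omega> = x0" unfolding Xp_def dX_0 using X_0 by simp
next
  fix n \<omega> assume n: "n < N" and w: "\<omega> \<in> space M"
  let ?d = "dW W T N (Suc n) \<omega>"
  have ld: "linear (disc_lap a)" by (rule disc_lap_linear[OF gaa])
  have r1: "X (Suc n) \<omega> - X n \<omega> = tau *\<^sub>R (disc_lap a (X (Suc n) \<omega>) + U n \<omega>) + ?d *\<^sub>R (X n \<omega> + r n)"
    by (rule X_rec[OF n w])
  have r2: "dX (Suc n) \<omega> - dX n \<omega> = tau *\<^sub>R (disc_lap a (dX (Suc n) \<omega>) + dU n \<omega>) + ?d *\<^sub>R (dX n \<omega> + 0)"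
    by (rule L.step_check[OF dX_rec[OF n]])
  have "Xp e (Suc n) \<omega> - Xp e n \<omega> = (X (Suc n) \<omega> - X n \<omega>) + e *\<^sub>R (dX (Suc n) \<omega> - dX n \<omega>)"
    unfolding Xp_def by (simp add: algebra_simps)
  also have "\<dots> = tau *\<^sub>R (disc_lap a (X (Suc n) \<omega>) + e *\<^sub>R disc_lap a (dX (Suc n) \<omega>) + (U n \<omega> + e *\<^sub>R dU n \<omega>))
      + ?d *\<^sub>R ((X n \<omega> + e *\<^sub>R dX n \<omega>) + r n)"
    unfolding r1 r2 by (simp add: algebra_simps)
  also have "disc_lap a (X (Suc n) \<omega>) + e *\<^sub>R disc_lap a (dX (Suc n) \<omega>) = disc_lap a (Xp e (Suc n) \<omega>)"
    unfolding Xp_def by (simp add: linear_add[OF ld] linear_scale[OF ld])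
  finally show "Xp e (Suc n) \<omega> - Xp e n \<omega> = tau *\<^sub>R (disc_lap a (Xp e (Suc n) \<omega>) + Up e n \<omega>)
          + dW W T N (Suc n) \<omega> *\<^sub>R (Xp e n \<omega> + r n)"
    unfolding Up_def Xp_def .
qed

definition "JX n = integral\<^sup>L M (\<lambda>\<omega>. X n \<omega> \<bullet> dX n \<omega>)"
definition "KX n = integral\<^sup>L M (\<lambda>\<omega>. (norm (dX n \<omega>))\<^sup>2)"
definition "JU n = integral\<^sup>L M (\<lambda>\<omega>. U n \<omega> \<bullet> dU n \<omega>)"
definition "KU n = integral\<^sup>L M (\<lambda>\<omega>. (norm (dU n \<omega>))\<^sup>2)"
definition "Lin = tau * (\<Sum>n\<in>{1..N}. JX n) + tau * (\<Sum>n<N. JU n) + \<alpha> * JX N"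
definition "Q = 1/2 * (tau * (\<Sum>n\<in>{1..N}. KX n) + tau * (\<Sum>n<N. KU n)) + \<alpha> / 2 * KX N"

lemma Xp_exp: "n \<le> N \<Longrightarrow> integral\<^sup>L M (\<lambda>\<omega>. (norm (Xp e n \<omega>))\<^sup>2) = integral\<^sup>L M (\<lambda>\<omega>. (norm (X n \<omega>))\<^sup>2) + 2 * e * JX n + e\<^sup>2 * KX n"
  unfolding Xp_def JX_def KX_def by (rule sq_expand[OF X_sq dX_sq X_M dX_M])

lemma Up_exp: "n < N \<Longrightarrow> integral\<^sup>L M (\<lambda>\<omega>. (norm (Up e n \<omega>))\<^sup>2) = integral\<^sup>L M (\<lambda>\<omega>. (norm (U n \<omega>))\<^sup>2) + 2 * e * JU n + e\<^sup>2 * KU n"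
  unfolding Up_def JU_def KU_def by (rule sq_expand[OF U_sq dU_sq U_M dU_M])

lemma cost_exp: "slq_cost M T N \<alpha> (Xp e) (Up e) = slq_cost M T N \<alpha> X U + e * Lin + e\<^sup>2 * Q"
proof -
  have sx: "(\<Sum>n\<in>{1..N}. integral\<^sup>L M (\<lambda>\<omega>. (norm (Xp e n \<omega>))\<^sup>2))
     = (\<Sum>n\<in>{1..N}. integral\<^sup>L M (\<lambda>\<omega>. (norm (X n \<omega>))\<^sup>2)) + 2 * e * (\<Sum>n\<in>{1..N}. JX n) + e\<^sup>2 * (\<Sum>n\<in>{1..N}. KX n)"
    by (simp add: Xp_exp sum.distrib sum_distrib_left)
  have su: "(\<Sum>n<N. integral\<^sup>L M (\<lambda>\<omega>. (norm (Up e n \<omega>))\<^sup>2))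
     = (\<Sum>n<N. integral\<^sup>L M (\<lambda>\<omega>. (norm (U n \<omega>))\<^sup>2)) + 2 * e * (\<Sum>n<N. JU n) + e\<^sup>2 * (\<Sum>n<N. KU n)"
    by (simp add: Up_exp sum.distrib sum_distrib_left)
  show ?thesis unfolding slq_cost_def sx su Xp_exp[OF order.refl] Lin_def Q_def
    by (simp add: algebra_simps)
qed

lemma Q_nonneg: "Q \<ge> 0"
proof -
  have "KX n \<ge> 0" for n unfolding KX_def by simp
  moreover have "KU n \<ge> 0" for n unfolding KU_def by simp
  ultimately show ?thesis unfolding Q_def using tau_pos alpha Tpos
    by (intro add_nonneg_nonneg mult_nonneg_nonneg sum_nonneg divide_nonneg_nonneg) auto
qed

lemma Lin_zero: "Lin = 0"
proof -
  have le: "slq_cost M T N \<alpha> X U \<le> slq_cost M T N \<alpha> X U + e * Lin + e\<^sup>2 * Q" for e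
    using opt adm'[of e] cost_exp[of e] unfolding slq_optimal_def by metis
  define e where "e = - Lin / (Q + 1)"
  have Q1: "Q + 1 > 0" using Q_nonneg by simp
  have eL: "Lin = - e * (Q + 1)" unfolding e_def using Q1 by simp
  have "0 \<le> e * Lin + e\<^sup>2 * Q" using le[of e] by simp
  also have "e * Lin + e\<^sup>2 * Q = - e\<^sup>2" unfolding eL by (simp add: power2_eq_square algebra_simps)
  finally have "e = 0" by simp
  then show ?thesis using eL by simp
qed

definition "Gf n \<omega> = (AA ^^ (n - i)) (P n \<omega> *\<^sub>R X n \<omega>)"

lemma JX_low: "n \<le> i \<Longrightarrow> JX n = 0"
  unfolding JX_def dX_def by simp

lemma JX_high: "i < n \<Longrightarrow> JX n = tau * integral\<^sup>L M (\<lambda>\<omega>. Gf n \<omega> \<bullet> phi \<omega>)"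
proof -
  assume n: "i < n"
  have "X n \<omega> \<bullet> dX n \<omega> = tau * (Gf n \<omega> \<bullet> phi \<omega>)" for \<omega>
  proof -
    have "X n \<omega> \<bullet> dX n \<omega> = tau * (X n \<omega> \<bullet> (AA ^^ (n - i)) (P n \<omega> *\<^sub>R phi \<omega>))"
      using n unfolding dX_def by simp
    also have "X n \<omega> \<bullet> (AA ^^ (n - i)) (P n \<omega> *\<^sub>R phi \<omega>) = (AA ^^ (n - i)) (X n \<omega>) \<bullet> (P n \<omega> *\<^sub>R phi \<omega>)"
      by (rule L.Apow_sym[symmetric])
    also have "\<dots> = Gf n \<omega> \<bullet> phi \<omega>" unfolding Gf_def by (simp add: L.Apow_scale)
    finally show ?thesis .
  qed
  then show ?thesis unfolding JX_def by simp
qed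

lemma JU_eq: "JU n = (if n = i then integral\<^sup>L M (\<lambda>\<omega>. U i \<omega> \<bullet> phi \<omega>) else 0)"
  unfolding JU_def dU_def by simp

lemma first_order:
  "integral\<^sup>L M (\<lambda>\<omega>. U i \<omega> \<bullet> phi \<omega>) + tau * (\<Sum>j\<in>{i+1..N}. integral\<^sup>L M (\<lambda>\<omega>. Gf j \<omega> \<bullet> phi \<omega>))
   + \<alpha> * integral\<^sup>L M (\<lambda>\<omega>. Gf N \<omega> \<bullet> phi \<omega>) = 0"
proof -
  have s1: "(\<Sum>n\<in>{1..N}. JX n) = (\<Sum>n\<in>{i+1..N}. JX n)"
    by (rule sum.mono_neutral_right) (auto simp: JX_low)
  also have "\<dots> = tau * (\<Sum>j\<in>{i+1..N}. integral\<^sup>L M (\<lambda>\<omega>. Gf j \<omega> \<bullet> phi \<omega>))"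
    by (simp add: JX_high sum_distrib_left)
  finally have s1': "(\<Sum>n\<in>{1..N}. JX n) = tau * (\<Sum>j\<in>{i+1..N}. integral\<^sup>L M (\<lambda>\<omega>. Gf j \<omega> \<bullet> phi \<omega>))" .
  have s2: "(\<Sum>n<N. JU n) = integral\<^sup>L M (\<lambda>\<omega>. U i \<omega> \<bullet> phi \<omega>)"
    unfolding JU_eq using iN by simp
  have s3: "JX N = tau * integral\<^sup>L M (\<lambda>\<omega>. Gf N \<omega> \<bullet> phi \<omega>)" by (rule JX_high[OF iN])
  have "0 = Lin" using Lin_zero by simp
  also have "Lin = tau * (integral\<^sup>L M (\<lambda>\<omega>. U i \<omega> \<bullet> phi \<omega>) + tau * (\<Sum>j\<in>{i+1..N}. integral\<^sup>L M (\<lambda>\<omega>. Gf j \<omega> \<bullet> phi \<omega>))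
   + \<alpha> * integral\<^sup>L M (\<lambda>\<omega>. Gf N \<omega> \<bullet> phi \<omega>))"
    unfolding Lin_def s1' s2 s3 by (simp add: algebra_simps)
  finally show ?thesis using Tpos Npos by simp
qed

end

context main begin

lemma Gint:
  assumes iN: "i < N" and jN: "j \<le> N"
  shows "integrable M (\<lambda>\<omega>. (AA ^^ (j - i)) ((\<Prod>k\<in>{i+2..j}. 1 + dW W T N k \<omega>) *\<^sub>R X j \<omega>))"
proof -
  define p where "p = (\<lambda>\<omega>. \<Prod>k\<in>{i+2..j}. 1 + dW W T N k \<omega>)"
  obtain C where C: "C > 0" "\<And>x. norm ((AA ^^ (j - i)) x) \<le> C * norm x"
    using L.Apow_bound[of "j - i"] by blast
  have [measurable]: "p \<in> borel_measurable M" unfolding p_def by (rule F_to_M[OF jN P_meas[OF order.refl jN]])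
  have [measurable]: "X j \<in> borel_measurable M" by (rule F_to_M[OF jN X_meas[OF jN]])
  have "integrable M (\<lambda>\<omega>. (AA ^^ (j - i)) (p \<omega> *\<^sub>R X j \<omega>))"
  proof (rule Bochner_Integration.integrable_bound[of _ "\<lambda>\<omega>. C * ((p \<omega>)\<^sup>2 + (norm (X j \<omega>))\<^sup>2)"])
    show "integrable M (\<lambda>\<omega>. C * ((p \<omega>)\<^sup>2 + (norm (X j \<omega>))\<^sup>2))"
      using P_sq_int[OF jN, of i] X_sq[OF jN] unfolding p_def by auto
    show "(\<lambda>\<omega>. (AA ^^ (j - i)) (p \<omega> *\<^sub>R X j \<omega>)) \<in> borel_measurable M" by measurable
    have "norm ((AA ^^ (j - i)) (p \<omega> *\<^sub>R X j \<omega>)) \<le> C * ((p \<omega>)\<^sup>2 + (norm (X j \<omega>))\<^sup>2)" for \<omega>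
    proof -
      have "norm ((AA ^^ (j - i)) (p \<omega> *\<^sub>R X j \<omega>)) \<le> C * (\<bar>p \<omega>\<bar> * norm (X j \<omega>))"
        using C(2)[of "p \<omega> *\<^sub>R X j \<omega>"] by simp
      also have "\<dots> \<le> C * ((p \<omega>)\<^sup>2 + (norm (X j \<omega>))\<^sup>2)"
      proof (rule mult_left_mono)
        show "0 \<le> C" using C by simp
        have "\<bar>p \<omega>\<bar> * norm (X j \<omega>) \<le> (\<bar>p \<omega>\<bar>)\<^sup>2 + (norm (X j \<omega>))\<^sup>2"
          using sum_squares_bound[of "\<bar>p \<omega>\<bar>" "norm (X j \<omega>)"]
            mult_nonneg_nonneg[OF abs_ge_zero[of "p \<omega>"] norm_ge_zero[of "X j \<omega>"]]
          unfolding power2_eq_square by linarith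
        then show "\<bar>p \<omega>\<bar> * norm (X j \<omega>) \<le> (p \<omega>)\<^sup>2 + (norm (X j \<omega>))\<^sup>2" by simp
      qed
      finally show ?thesis .
    qed
    then show "AE \<omega> in M. norm ((AA ^^ (j - i)) (p \<omega> *\<^sub>R X j \<omega>)) \<le> norm (C * ((p \<omega>)\<^sup>2 + (norm (X j \<omega>))\<^sup>2))"
      using C by (simp add: abs_of_nonneg)
  qed
  then show ?thesis unfolding p_def .
qed

abbreviation "SS i \<equiv> (\<lambda>\<omega>'. \<Sum>j\<in>{i+1..N}. (AA ^^ (j - i))
                  ((\<Prod>k\<in>{i+2..j}. 1 + dW W T N k \<omega>') *\<^sub>R X j \<omega>'))"
abbreviation "VV i \<equiv> (\<lambda>\<omega>'. (AA ^^ (N - i))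
                  ((\<Prod>k\<in>{i+2..N}. 1 + dW W T N k \<omega>') *\<^sub>R X N \<omega>'))"

lemma SS_int: "i < N \<Longrightarrow> integrable M (SS i)"
  by (rule Bochner_Integration.integrable_sum) (rule Gint, auto)

lemma VV_int: "i < N \<Longrightarrow> integrable M (VV i)"
  by (rule Gint) auto

lemma K_eq: "K_op M W T N \<alpha> a X i = (\<lambda>\<omega>. - tau *\<^sub>R vec_cond_exp M (F i) (SS i) \<omega> - \<alpha> *\<^sub>R vec_cond_exp M (F i) (VV i) \<omega>)"
  unfolding K_op_def by simp

lemma K_meas: "K_op M W T N \<alpha> a X i \<in> borel_measurable (F i)"
  unfolding K_eq using vce_meas by measurable

lemma K_int: "i < N \<Longrightarrow> integrable M (K_op M W T N \<alpha> a X i)"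
proof -
  assume iN: "i < N"
  have s: "sigma_finite_subalgebra M (F i)" by (rule sfs) (use iN in simp)
  show ?thesis unfolding K_eq
    using vce_int[OF s SS_int[OF iN]] vce_int[OF s VV_int[OF iN]] by auto
qed

end

context pert begin

lemma Gf_eq: "Gf j = (\<lambda>\<omega>. (AA ^^ (j - i)) ((\<Prod>k\<in>{i+2..j}. 1 + dW W T N k \<omega>) *\<^sub>R X j \<omega>))"
  unfolding Gf_def[abs_def] P_def ..

lemma orth: "integral\<^sup>L M (\<lambda>\<omega>. (U i \<omega> - K_op M W T N \<alpha> a X i \<omega>) \<bullet> phi \<omega>) = 0"
proof -
  have s: "sigma_finite_subalgebra M (F i)" by (rule sfs) (use iN in simp)
  have pM[measurable]: "phi \<in> borel_measurable M" by (rule phi_M)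
  have Uint: "integrable M (U i)"
    using sq_int_imp_int[OF _ U_sq[OF iN] U_M[OF iN]] ps by (simp add: prob_space_def)
  have vS: "integrable M (vec_cond_exp M (F i) (SS i))" by (rule vce_int[OF s SS_int[OF iN]])
  have vV: "integrable M (vec_cond_exp M (F i) (VV i))" by (rule vce_int[OF s VV_int[OF iN]])
  have eS: "integral\<^sup>L M (\<lambda>\<omega>. vec_cond_exp M (F i) (SS i) \<omega> \<bullet> phi \<omega>)
      = (\<Sum>j\<in>{i+1..N}. integral\<^sup>L M (\<lambda>\<omega>. Gf j \<omega> \<bullet> phi \<omega>))"
  proof -
    have "integral\<^sup>L M (\<lambda>\<omega>. vec_cond_exp M (F i) (SS i) \<omega> \<bullet> phi \<omega>) = integral\<^sup>L M (\<lambda>\<omega>. SS i \<omega> \<bullet> phi \<omega>)"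
      by (rule vce_inner[OF s SS_int[OF iN] phi_meas phi_bnd])
    also have "\<dots> = integral\<^sup>L M (\<lambda>\<omega>. \<Sum>j\<in>{i+1..N}. Gf j \<omega> \<bullet> phi \<omega>)"
      unfolding Gf_eq by (simp add: inner_sum_left)
    also have "\<dots> = (\<Sum>j\<in>{i+1..N}. integral\<^sup>L M (\<lambda>\<omega>. Gf j \<omega> \<bullet> phi \<omega>))"
      by (rule Bochner_Integration.integral_sum, rule int_inner_bdd[OF _ pM phi_bnd])
         (unfold Gf_eq, rule Gint[OF iN], auto)
    finally show ?thesis .
  qed
  have eV: "integral\<^sup>L M (\<lambda>\<omega>. vec_cond_exp M (F i) (VV i) \<omega> \<bullet> phi \<omega>)
      = integral\<^sup>L M (\<lambda>\<omega>. Gf N \<omega> \<bullet> phi \<omega>)"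
    unfolding Gf_eq by (rule vce_inner[OF s VV_int[OF iN] phi_meas phi_bnd])
  have i1: "integrable M (\<lambda>\<omega>. U i \<omega> \<bullet> phi \<omega>)" by (rule int_inner_bdd[OF Uint pM phi_bnd])
  have i2: "integrable M (\<lambda>\<omega>. vec_cond_exp M (F i) (SS i) \<omega> \<bullet> phi \<omega>)" by (rule int_inner_bdd[OF vS pM phi_bnd])
  have i3: "integrable M (\<lambda>\<omega>. vec_cond_exp M (F i) (VV i) \<omega> \<bullet> phi \<omega>)" by (rule int_inner_bdd[OF vV pM phi_bnd])
  have pw: "(U i \<omega> - K_op M W T N \<alpha> a X i \<omega>) \<bullet> phi \<omega> = U i \<omega> \<bullet> phi \<omega>
      + tau * (vec_cond_exp M (F i) (SS i) \<omega> \<bullet> phi \<omega>) + \<alpha> * (vec_cond_exp M (F i) (VV i) \<omega> \<bullet> phi \<omega>)" for \<omega>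
    unfolding K_eq by (simp add: inner_diff_left inner_add_left algebra_simps)
  have "integral\<^sup>L M (\<lambda>\<omega>. (U i \<omega> - K_op M W T N \<alpha> a X i \<omega>) \<bullet> phi \<omega>)
     = integral\<^sup>L M (\<lambda>\<omega>. U i \<omega> \<bullet> phi \<omega>) + tau * integral\<^sup>L M (\<lambda>\<omega>. vec_cond_exp M (F i) (SS i) \<omega> \<bullet> phi \<omega>)
       + \<alpha> * integral\<^sup>L M (\<lambda>\<omega>. vec_cond_exp M (F i) (VV i) \<omega> \<bullet> phi \<omega>)"
    unfolding pw using i1 i2 i3 by simp
  also have "\<dots> = 0" unfolding eS eV by (rule first_order)
  finally show ?thesis .
qed

end

context main begin

lemma optimality:
  assumes iN: "i < N"
  shows "AE \<omega> in M. U i \<omega> - K_op M W T N \<alpha> a X i \<omega> = 0"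
proof -
  define Z where "Z = (\<lambda>\<omega>. U i \<omega> - K_op M W T N \<alpha> a X i \<omega>)"
  define phi where "phi = (\<lambda>\<omega>. (1 / (1 + norm (Z \<omega>))) *\<^sub>R Z \<omega>)"
  have [measurable]: "U i \<in> borel_measurable (F i)" by (rule U_meas[OF iN])
  have [measurable]: "K_op M W T N \<alpha> a X i \<in> borel_measurable (F i)" by (rule K_meas)
  have ZF[measurable]: "Z \<in> borel_measurable (F i)" unfolding Z_def by measurable
  have phiF: "phi \<in> borel_measurable (F i)" unfolding phi_def by measurable
  have ZM[measurable]: "Z \<in> borel_measurable M" by (rule F_to_M[OF _ ZF]) (use iN in simp)
  have bnd: "norm (phi \<omega>) \<le> 1" for \<omega>
  proof -
    have "norm (phi \<omega>) = norm (Z \<omega>) / (1 + norm (Z \<omega>))" unfolding phi_def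
      by (simp add: divide_inverse_commute)
    also have "\<dots> \<le> 1" by (simp add: add_pos_nonneg)
    finally show ?thesis .
  qed
  interpret pert M W T N a \<alpha> x0 r X U i phi
    by unfold_locales (use iN phiF bnd in auto)
  have e0: "integral\<^sup>L M (\<lambda>\<omega>. Z \<omega> \<bullet> phi \<omega>) = 0" using orth unfolding Z_def .
  have pw: "Z \<omega> \<bullet> phi \<omega> = (norm (Z \<omega>))\<^sup>2 / (1 + norm (Z \<omega>))" for \<omega>
    unfolding phi_def by (simp add: power2_norm_eq_inner divide_inverse_commute)
  have Uint: "integrable M (U i)"
    using sq_int_imp_int[OF _ U_sq[OF iN] U_M[OF iN]] ps by (simp add: prob_space_def)
  have Zint: "integrable M Z" unfolding Z_def using Uint K_int[OF iN] by auto
  have int: "integrable M (\<lambda>\<omega>. (norm (Z \<omega>))\<^sup>2 / (1 + norm (Z \<omega>)))"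
    using int_inner_bdd[OF Zint phi_M bnd] unfolding pw .
  have "integral\<^sup>L M (\<lambda>\<omega>. (norm (Z \<omega>))\<^sup>2 / (1 + norm (Z \<omega>))) = 0" using e0 unfolding pw .
  then have "AE \<omega> in M. (norm (Z \<omega>))\<^sup>2 / (1 + norm (Z \<omega>)) = 0"
    using integral_nonneg_eq_0_iff_AE[OF int] by (simp add: add_pos_nonneg)
  then show ?thesis
  proof (rule AE_mp, intro AE_I2 impI)
    fix \<omega> assume "(norm (Z \<omega>))\<^sup>2 / (1 + norm (Z \<omega>)) = 0"
    moreover have "1 + norm (Z \<omega>) > 0" by (simp add: add_pos_nonneg)
    ultimately have "Z \<omega> = 0" by simp
    then show "U i \<omega> - K_op M W T N \<alpha> a X i \<omega> = 0" unfolding Z_def .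
  qed
qed

end

theorem theorem3p2:
  fixes M :: "'w measure" and W :: "real \<Rightarrow> 'w \<Rightarrow> real"
    and T \<alpha> :: real and N :: nat
    and a :: "'v::euclidean_space \<Rightarrow> 'v \<Rightarrow> real"
    and x0 :: 'v and r :: "nat \<Rightarrow> 'v"
    and X U :: "nat \<Rightarrow> 'w \<Rightarrow> 'v"
  assumes "prob_space M" and "complete_measure M" and "wiener_process M T W"
    and "T > 0" and "N > 0" and "T / real N \<le> 1" and "\<alpha> \<ge> 0"
    and "grad_form a"
    and "slq_optimal M W T N \<alpha> a x0 r X U"
  shows "(\<forall>n<N. \<forall>\<omega>\<in>space M.
            X (Suc n) \<omega> =
              (A0 a (T / real N) ^^ (n + 1))
                 ((\<Prod>j\<in>{1..n+1}. 1 + dW W T N j \<omega>) *\<^sub>R X 0 \<omega>)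
            + (T / real N) *\<^sub>R (\<Sum>j\<in>{0..n}. (A0 a (T / real N) ^^ (n + 1 - j))
                 ((\<Prod>k\<in>{j+2..n+1}. 1 + dW W T N k \<omega>) *\<^sub>R U j \<omega>))
            + (\<Sum>j\<in>{0..n}. (A0 a (T / real N) ^^ (n + 1 - j))
                 ((\<Prod>k\<in>{j+2..n+1}. 1 + dW W T N k \<omega>) *\<^sub>R (dW W T N (j + 1) \<omega> *\<^sub>R r j))))
       \<and> (\<forall>\<omega>\<in>space M. X 0 \<omega> = x0)
       \<and> (\<forall>n<N. AE \<omega> in M. U n \<omega> - K_op M W T N \<alpha> a X n \<omega> = 0)"
  proof -
  interpret main M W T N a \<alpha> x0 r X U
    by (intro main.intro setting.intro main_axioms.intro) (use assms in auto)
  show ?thesis using mild X_0 optimality by auto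
qed

end
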